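(* Assume (H1), (H2). Fix $\lambda>f'(0)$ and let $s_*$ be a $\lambda$-conjugate point. Let $\mathcal W$ be a Lagrangian plane transverse to $\mathbb E^u_-(s_*,\lambda)$ and, for $s$ near $s_*$, let $A(s):\mathbb E^u_-(s_*,\lambda)\to\mathcal W$ be the linear map whose graph is $\mathbb E^u_-(s,\lambda)$. If $v\in\mathbb E^u_-(s_*,\lambda)\cap\ell_*^{sand}$ and $p(\cdot,\lambda)$ is the solution of $q'=B(x,\lambda)q$ decaying as $x\to-\infty$ with $p(s_*,\lambda)=v=(p_1,p_2,p_3,p_4)(s_*,\lambda)$, then $$Q^{(1)}(v):=\frac{d}{ds}\omega(v,A(s)v)\Big|_{s=s_*}=\big(p_2(s_*;\lambda)\big)^2.$$
   Context: Fix real $\nu,\mu$ and $f(u)=\nu u^2-u^3-\mu u$. (H1): $\varphi$ is a smooth stationary solution of $u_t=-(1+\partial_x^2)^2u+f(u)$ with $\varphi\to0$ at $\pm\infty$. (H2): $f'(0)<0$. $B(x,\lambda)=\begin{pmatrix}0&0&0&1\\0&0&1&-2\\-\lambda-1+f'(\varphi(x))&0&0&0\\0&1&0&0\end{pmatrix}$; $\omega(u,v)=\langle u,Jv\rangle$, $J=\begin{pmatrix}0&I_2\\-I_2&0\end{pmatrix}$. $\mathbb E^u_-(x,\lambda)$ is the set of values $q(x)$ of solutions of $q'=B(y,\lambda)q$ with $q(y)\to0$ as $y\to-\infty$ (a 2-dimensional Lagrangian plane). $\ell_*^{sand}=\{q\in\mathbb R^4:q_1=q_4=0\}$; $s$ is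 a $\lambda$-conjugate point if $\mathbb E^u_-(s,\lambda)\cap\ell_*^{sand}\ne\{0\}$. For Lagrangian $\ell_0$ and $\mathcal W$ transverse, the graph map of a nearby Lagrangian $\ell$ is the unique linear $A:\ell_0\to\mathcal W$ with $\ell=\{v+Av:v\in\ell_0\}$. *)

theory Defs
  imports "HOL-Analysis.Analysis"
begin

definition fnl :: "real \<Rightarrow> real \<Rightarrow> real \<Rightarrow> real" where
  "fnl nu mu u = nu * u^2 - u^3 - mu * u"

definition fnl' :: "real \<Rightarrow> real \<Rightarrow> real \<Rightarrow> real" where
  "fnl' nu mu u = 2 * nu * u - 3 * u^2 - mu"

definition smooth_fun :: "(real \<Rightarrow> real) \<Rightarrow> bool" where
  "smooth_fun g \<longleftrightarrow> (\<forall>n x. ((deriv ^^ n) g) differentiable (at x))"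

text \<open>(H1): phi is a smooth stationary solution of
  u_t = -(1+d^2)^2 u + f(u), decaying at both infinities.\<close>
definition H1 :: "real \<Rightarrow> real \<Rightarrow> (real \<Rightarrow> real) \<Rightarrow> bool" where
  "H1 nu mu phi \<longleftrightarrow> smooth_fun phi \<and>
     (\<forall>x. - ((deriv ^^ 4) phi x + 2 * (deriv ^^ 2) phi x + phi x) + fnl nu mu (phi x) = 0) \<and>
     (phi \<longlongrightarrow> 0) at_top \<and> (phi \<longlongrightarrow> 0) at_bot"

definition H2 :: "real \<Rightarrow> real \<Rightarrow> bool" where
  "H2 nu mu \<longleftrightarrow> fnl' nu mu 0 < 0"

definition Bmat :: "real \<Rightarrow> real \<Rightarrow> (real \<Rightarrow> real) \<Rightarrow> real \<Rightarrow> real \<Rightarrow> real^4^4" where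
  "Bmat nu mu phi x lam = vector [
      vector [0, 0, 0, 1],
      vector [0, 0, 1, -2],
      vector [- lam - 1 + fnl' nu mu (phi x), 0, 0, 0],
      vector [0, 1, 0, 0]]"

definition is_sol :: "real \<Rightarrow> real \<Rightarrow> (real \<Rightarrow> real) \<Rightarrow> real \<Rightarrow> (real \<Rightarrow> real^4) \<Rightarrow> bool" where
  "is_sol nu mu phi lam q \<longleftrightarrow>
     (\<forall>y. (q has_vector_derivative (Bmat nu mu phi y lam *v q y)) (at y))"

definition Eu :: "real \<Rightarrow> real \<Rightarrow> (real \<Rightarrow> real) \<Rightarrow> real \<Rightarrow> real \<Rightarrow> (real^4) set" where
  "Eu nu mu phi x lam = {q x | q. is_sol nu mu phi lam q \<and> (q \<longlongrightarrow> 0) at_bot}"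

definition Jmat :: "real^4^4" where
  "Jmat = vector [
      vector [0, 0, 1, 0],
      vector [0, 0, 0, 1],
      vector [-1, 0, 0, 0],
      vector [0, -1, 0, 0]]"

definition omega :: "real^4 \<Rightarrow> real^4 \<Rightarrow> real" where
  "omega u v = u \<bullet> (Jmat *v v)"

definition lagrangian :: "(real^4) set \<Rightarrow> bool" where
  "lagrangian L \<longleftrightarrow> subspace L \<and> dim L = 2 \<and> (\<forall>u\<in>L. \<forall>v\<in>L. omega u v = 0)"

definition transverse :: "(real^4) set \<Rightarrow> (real^4) set \<Rightarrow> bool" where
  "transverse U V \<longleftrightarrow> {u + v | u v. u \<in> U \<and> v \<in> V} = UNIV \<and> U \<inter> V = {0}"

definition ell_sand :: "(real^4) set" where
  "ell_sand = {q. q $ 1 = 0 \<and> q $ 4 = 0}"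

definition conjugate_point :: "real \<Rightarrow> real \<Rightarrow> (real \<Rightarrow> real) \<Rightarrow> real \<Rightarrow> real \<Rightarrow> bool" where
  "conjugate_point nu mu phi lam s \<longleftrightarrow> Eu nu mu phi s lam \<inter> ell_sand \<noteq> {0}"

definition graph_map :: "(real^4) set \<Rightarrow> (real^4) set \<Rightarrow> (real^4) set \<Rightarrow> (real^4 \<Rightarrow> real^4) \<Rightarrow> bool" where
  "graph_map l0 W l A \<longleftrightarrow> linear A \<and> (\<forall>v\<in>l0. A v \<in> W) \<and> l = (\<lambda>v. v + A v) ` l0"

end

theory Submission
  imports Defs
begin


lemma vec4_nth[simp]:
  "(vector [a,b,c,d] :: real^4) $ 1 = a" "(vector [a,b,c,d] :: real^4) $ 2 = b"
  "(vector [a,b,c,d] :: real^4) $ 3 = c" "(vector [a,b,c,d] :: real^4) $ 4 = d"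
  unfolding vector_def by simp_all

lemma vec4_nthv[simp]:
  "(vector [a,b,c,d] :: real^4^4) $ 1 = a" "(vector [a,b,c,d] :: real^4^4) $ 2 = b"
  "(vector [a,b,c,d] :: real^4^4) $ 3 = c" "(vector [a,b,c,d] :: real^4^4) $ 4 = d"
  unfolding vector_def by simp_all

lemma Bmult: "Bmat nu mu phi x lam *v q =
   vector [q$4, q$3 - 2*q$4, (- lam - 1 + fnl' nu mu (phi x)) * q$1, q$2]"
  by (simp add: vec_eq_iff forall_4 matrix_vector_mult_def sum_4 Bmat_def)

lemma omega_expand: "omega a b = a$1*b$3 + a$2*b$4 - a$3*b$1 - a$4*b$2"
  by (simp add: omega_def Jmat_def inner_vec_def sum_4 matrix_vector_mult_def)

lemma comp_deriv:
  assumes "is_sol nu mu phi lam q"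
  shows "((\<lambda>t. q t $ i) has_real_derivative (Bmat nu mu phi t lam *v q t) $ i) (at t)"
  using bounded_linear.has_vector_derivative[OF bounded_linear_vec_nth[of i]] assms
  unfolding is_sol_def has_real_derivative_iff_has_vector_derivative by blast



lemma omega_const:
  assumes q1: "is_sol nu mu phi lam q1" and q2: "is_sol nu mu phi lam q2"
  shows "((\<lambda>t. omega (q1 t) (q2 t)) has_real_derivative 0) (at t)"
proof -
  note d1 = comp_deriv[OF q1] and d2 = comp_deriv[OF q2]
  have "((\<lambda>t. q1 t$1*q2 t$3 + q1 t$2*q2 t$4 - q1 t$3*q2 t$1 - q1 t$4*q2 t$2) has_real_derivative 0) (at t)"
    by (rule derivative_eq_intros d1 d2 refl)+ (simp add: Bmult algebra_simps)
  then show ?thesis by (simp add: omega_expand)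
qed

lemma iso:
  assumes q1: "is_sol nu mu phi lam q1" and q2: "is_sol nu mu phi lam q2"
    and l1: "(q1 \<longlongrightarrow> 0) at_bot" and l2: "(q2 \<longlongrightarrow> 0) at_bot"
  shows "omega (q1 y) (q2 y) = 0"
proof -
  let ?h = "\<lambda>t. omega (q1 t) (q2 t)"
  have c: "?h t = ?h y" for t
    using DERIV_isconst_all[of ?h t y] omega_const[OF q1 q2] by blast
  have comp: "((\<lambda>t. q t $ i) \<longlongrightarrow> 0) at_bot" if "(q \<longlongrightarrow> 0) at_bot" for q :: "real \<Rightarrow> real^4" and i
    using tendsto_vec_nth[OF that, of i] by simp
  have "(?h \<longlongrightarrow> 0*0 + 0*0 - 0*0 - 0*0) at_bot"
    unfolding omega_expand
    by (intro tendsto_intros comp l1 l2)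
  then have "((\<lambda>t::real. ?h y) \<longlongrightarrow> 0) at_bot" proof -
    have "?h = (\<lambda>t. ?h y)" using c by (rule ext)
    with \<open>(?h \<longlongrightarrow> _) at_bot\<close> show ?thesis by simp
  qed
  then show ?thesis by (metis tendsto_const tendsto_unique trivial_limit_at_bot_linorder)
qed

lemma Eu_subspace: "subspace (Eu nu mu phi x lam)"
  unfolding subspace_def
proof (intro conjI ballI allI)
  show "0 \<in> Eu nu mu phi x lam"
    unfolding Eu_def is_sol_def
    by (rule CollectI, rule exI[of _ "\<lambda>_. 0"]) (simp add: Bmult)
next
  fix a b assume "a \<in> Eu nu mu phi x lam" "b \<in> Eu nu mu phi x lam"
  then obtain qa qb where qa: "a = qa x" "is_sol nu mu phi lam qa" "(qa \<longlongrightarrow> 0) at_bot"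
    and qb: "b = qb x" "is_sol nu mu phi lam qb" "(qb \<longlongrightarrow> 0) at_bot"
    unfolding Eu_def by blast
  have "is_sol nu mu phi lam (\<lambda>t. qa t + qb t)"
    using qa(2) qb(2) unfolding is_sol_def
    by (metis (no_types) has_vector_derivative_add matrix_vector_right_distrib)
  moreover have "((\<lambda>t. qa t + qb t) \<longlongrightarrow> 0) at_bot"
    using tendsto_add[OF qa(3) qb(3)] by simp
  ultimately show "a + b \<in> Eu nu mu phi x lam"
    unfolding Eu_def using qa(1) qb(1) by (intro CollectI exI[of _ "\<lambda>t. qa t + qb t"]) simp
next
  fix c :: real and a assume "a \<in> Eu nu mu phi x lam"
  then obtain qa where qa: "a = qa x" "is_sol nu mu phi lam qa" "(qa \<longlongrightarrow> 0) at_bot"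
    unfolding Eu_def by blast
  have "is_sol nu mu phi lam (\<lambda>t. c *\<^sub>R qa t)"
    using qa(2) unfolding is_sol_def
    using bounded_linear.has_vector_derivative[OF bounded_linear_scaleR_right[of c]]
    by (metis (no_types) matrix_vector_mult_scaleR)
  moreover have "((\<lambda>t. c *\<^sub>R qa t) \<longlongrightarrow> 0) at_bot"
    using tendsto_scaleR[OF tendsto_const qa(3), of c] by simp
  ultimately show "c *\<^sub>R a \<in> Eu nu mu phi x lam"
    unfolding Eu_def using qa(1) by (intro CollectI exI[of _ "\<lambda>t. c *\<^sub>R qa t"]) simp
qed



lemma omega_lin2: "omega v (a *\<^sub>R x + b *\<^sub>R y) = a * omega v x + b * omega v y"
  by (simp add: omega_expand algebra_simps)

lemma omega_add2: "omega v (x + y) = omega v x + omega v y"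
  by (simp add: omega_expand algebra_simps)

lemma omega_self: "omega v v = 0"
  by (simp add: omega_expand algebra_simps)

lemma omega_zero1: "omega 0 v = 0"
  by (simp add: omega_expand)

lemma omega_bl: "bounded_linear (\<lambda>z. omega v z)"
proof -
  have "linear (\<lambda>z. omega v z)"
    by (rule linearI) (simp_all add: omega_expand algebra_simps)
  then show ?thesis using linear_conv_bounded_linear by blast
qed

lemma sol_deriv_lin:
  assumes "is_sol nu mu phi lam q" "linear (h :: real^4 \<Rightarrow> real)"
  shows "((\<lambda>s. h (q s)) has_real_derivative h (Bmat nu mu phi t lam *v q t)) (at t)"
  using bounded_linear.has_vector_derivative[of h, OF _ assms(1)[unfolded is_sol_def, rule_format, of t]]
    assms(2) linear_conv_bounded_linear
  unfolding has_real_derivative_iff_has_vector_derivative by blast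

lemma span2_coord:
  assumes "y \<in> span {v, u}" "linear f" "linear g" "f v = 1" "f u = 0" "g v = 0" "g u = 1"
  shows "y = f y *\<^sub>R v + g y *\<^sub>R (u::real^4)"
proof -
  from assms(1) obtain a b where y: "y = a *\<^sub>R v + b *\<^sub>R u"
    unfolding span_breakdown_eq span_singleton
    by (metis (no_types, lifting) add.commute diff_add_cancel rangeE)
  have "f y = a" "g y = b"
    using assms(2-7) by (simp_all add: y linear_add linear_scale)
  then show ?thesis using y by simp
qed



theorem lemma3:
  fixes nu mu lam s0 :: real and phi :: "real \<Rightarrow> real"
    and W :: "(real^4) set" and A :: "real \<Rightarrow> real^4 \<Rightarrow> real^4"
    and v :: "real^4" and p :: "real \<Rightarrow> real^4"
  assumes H1: "H1 nu mu phi" and H2: "H2 nu mu"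
    and lam: "lam > fnl' nu mu 0"
    and conj: "conjugate_point nu mu phi lam s0"
    and W: "lagrangian W" and transv: "transverse (Eu nu mu phi s0 lam) W"
    and Agraph: "\<exists>\<delta>>0. \<forall>s. \<bar>s - s0\<bar> < \<delta> \<longrightarrow>
                    graph_map (Eu nu mu phi s0 lam) W (Eu nu mu phi s lam) (A s)"
    and v: "v \<in> Eu nu mu phi s0 lam \<inter> ell_sand"
    and psol: "is_sol nu mu phi lam p" and pdec: "(p \<longlongrightarrow> 0) at_bot"
    and pv: "p s0 = v"
  shows "((\<lambda>s. omega v (A s v)) has_real_derivative (p s0 $ 2)^2) (at s0)"
proof (cases "v = 0")
  case True
  then show ?thesis using pv by (simp add: omega_zero1)
next
  case vnz: False
  define l0 where "l0 = Eu nu mu phi s0 lam"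
  have l0sub: "subspace l0" unfolding l0_def by (rule Eu_subspace)
  have Wsub: "subspace W" and dimW: "dim W = 2" and Wiso: "\<And>a b. a \<in> W \<Longrightarrow> b \<in> W \<Longrightarrow> omega a b = 0"
    using W unfolding lagrangian_def by auto
  have sumU: "{x + y |x y. x \<in> l0 \<and> y \<in> W} = UNIV" and int0: "l0 \<inter> W = {0}"
    using transv unfolding transverse_def l0_def by auto
  have "dim {x + y |x y. x \<in> l0 \<and> y \<in> W} + dim (l0 \<inter> W) = dim l0 + dim W"
    by (rule dim_sums_Int[OF l0sub Wsub])
  then have diml0: "dim l0 = 2" using sumU int0 dimW by simp
  have vl0: "v \<in> l0" and v1: "v $ 1 = 0" and v4: "v $ 4 = 0"
    using v unfolding l0_def ell_sand_def by auto
  obtain B where B: "{v} \<subseteq> B" "B \<subseteq> l0" "independent B" "l0 \<subseteq> span B"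
    using maximal_independent_subset_extend[of "{v}" l0] vl0 vnz
    by (metis empty_subsetI independent_empty independent_insertI insert_subset span_empty singletonD)
  have "card B = 2" using basis_card_eq_dim[OF B(2,4,3)] diml0 by simp
  then obtain u where Bvu: "B = {v, u}" and uv: "u \<noteq> v"
    using B(1) by (auto simp: card_2_iff)
  have ul0: "u \<in> l0" using B(2) Bvu by auto
  have unz: "u \<noteq> 0" using B(3) Bvu by (metis dependent_zero insertCI)
  have l0span: "l0 \<subseteq> span {v, u}" using B(4) Bvu by simp
  obtain BW where BW: "BW \<subseteq> W" "independent BW" "W \<subseteq> span BW" "card BW = dim W"
    by (rule basis_exists)
  then obtain w1 w2 where BW12: "BW = {w1, w2}" using dimW by (auto simp: card_2_iff)
  have w1W: "w1 \<in> W" and w2W: "w2 \<in> W" using BW(1) BW12 by auto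
  have vW: "v \<notin> W" using vl0 vnz int0 by auto
  have uW: "u \<notin> W" using ul0 unz int0 by auto
  define C where "C = {v, u, w1, w2}"
  have spanC: "UNIV \<subseteq> span C"
  proof
    fix x :: "real^4"
    have "x \<in> {x + y |x y. x \<in> l0 \<and> y \<in> W}" using sumU by simp
    then obtain a b where ab: "x = a + b" "a \<in> l0" "b \<in> W" by blast
    have "a \<in> span C" using ab(2) l0span span_mono[of "{v,u}" C] unfolding C_def by auto
    moreover have "b \<in> span C" using ab(3) BW(3) BW12 span_mono[of "{w1,w2}" C] unfolding C_def by auto
    ultimately show "x \<in> span C" using ab(1) span_add by blast
  qed
  have indC: "independent C"
  proof (rule card_le_dim_spanning[OF _ spanC])
    show "C \<subseteq> UNIV" by simp
    show "finite C" unfolding C_def by simp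
    have "card C \<le> 4" unfolding C_def
      using card_length[of "[v,u,w1,w2]"] by simp
    then show "card C \<le> dim (UNIV :: (real^4) set)" by simp
  qed
  obtain f :: "real^4 \<Rightarrow> real" where f: "linear f" "\<forall>x\<in>C. f x = (if x = v then 1 else 0)"
    using linear_independent_extend[OF indC, of "\<lambda>x. if x = v then 1 else 0"] by auto
  obtain g :: "real^4 \<Rightarrow> real" where g: "linear g" "\<forall>x\<in>C. g x = (if x = u then 1 else 0)"
    using linear_independent_extend[OF indC, of "\<lambda>x. if x = u then 1 else 0"] by auto
  have w1v: "w1 \<noteq> v" "w2 \<noteq> v" "w1 \<noteq> u" "w2 \<noteq> u" using w1W w2W vW uW by auto
  have fv: "f v = 1" "f u = 0" "g v = 0" "g u = 1"
    using f(2) g(2) uv unfolding C_def by simp_all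
  have fW: "f w = 0" "g w = 0" if "w \<in> W" for w
  proof -
    have ws: "w \<in> span {w1, w2}" using that BW(3) BW12 by auto
    show "f w = 0"
      by (rule linear_eq_0_on_span[OF f(1) _ ws]) (use f(2) w1v in \<open>auto simp: C_def\<close>)
    show "g w = 0"
      by (rule linear_eq_0_on_span[OF g(1) _ ws]) (use g(2) w1v in \<open>auto simp: C_def\<close>)
  qed
  have coord: "y = f y *\<^sub>R v + g y *\<^sub>R u" if "y \<in> l0" for y
    using span2_coord[OF _ f(1) g(1) fv] that l0span by blast
  obtain r where rsol: "is_sol nu mu phi lam r" and rdec: "(r \<longlongrightarrow> 0) at_bot" and ru: "r s0 = u"
    using ul0 unfolding l0_def Eu_def by blast
  have omvu: "omega v u = 0" using iso[OF psol rsol pdec rdec, of s0] pv ru by simp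
  obtain \<delta> where dpos: "\<delta> > 0" and gm: "\<And>s. \<bar>s - s0\<bar> < \<delta> \<Longrightarrow>
      graph_map l0 W (Eu nu mu phi s lam) (A s)"
    using Agraph unfolding l0_def by blast
  have key: "q s = f (q s) *\<^sub>R (v + A s v) + g (q s) *\<^sub>R (u + A s u)"
    if s: "\<bar>s - s0\<bar> < \<delta>" and qs: "is_sol nu mu phi lam q" and qd: "(q \<longlongrightarrow> 0) at_bot" for s q
  proof -
    have lin: "linear (A s)" and AW: "\<And>y. y \<in> l0 \<Longrightarrow> A s y \<in> W"
      and Eus: "Eu nu mu phi s lam = (\<lambda>y. y + A s y) ` l0"
      using gm[OF s] unfolding graph_map_def by auto
    have "q s \<in> Eu nu mu phi s lam" unfolding Eu_def using qs qd by blast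
    then obtain y where y: "y \<in> l0" "q s = y + A s y" using Eus by auto
    have fq: "f (q s) = f y" using y fW[OF AW[OF y(1)]] f(1) by (simp add: linear_add)
    have gq: "g (q s) = g y" using y fW[OF AW[OF y(1)]] g(1) by (simp add: linear_add)
    have yc: "y = f y *\<^sub>R v + g y *\<^sub>R u" using coord[OF y(1)] .
    have "A s y = f y *\<^sub>R A s v + g y *\<^sub>R A s u"
      by (subst yc) (simp add: lin linear_add linear_scale)
    then show ?thesis using y(2) yc fq gq by (simp add: algebra_simps)
  qed
  define D where "D s = f (p s) * g (r s) - f (r s) * g (p s)" for s
  define G where "G s = (g (r s) * omega v (p s) - g (p s) * omega v (r s)) / D s" for s
  have eq: "omega v (A s v) * D s = g (r s) * omega v (p s) - g (p s) * omega v (r s)"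
    if s: "\<bar>s - s0\<bar> < \<delta>" for s
  proof -
    have Q: "omega v (v + A s v) = omega v (A s v)" by (simp add: omega_add2 omega_self)
    have "omega v (p s) = f (p s) * omega v (A s v) + g (p s) * omega v (u + A s u)"
      by (subst key[OF s psol pdec]) (simp add: omega_lin2 Q)
    moreover have "omega v (r s) = f (r s) * omega v (A s v) + g (r s) * omega v (u + A s u)"
      by (subst key[OF s rsol rdec]) (simp add: omega_lin2 Q)
    ultimately show ?thesis unfolding D_def by (simp add: algebra_simps)
  qed
  have linom: "linear (\<lambda>z. omega v z)" using omega_bl bounded_linear.linear by blast
  note dfp = sol_deriv_lin[OF psol f(1), of s0] and dgp = sol_deriv_lin[OF psol g(1), of s0]
    and dfr = sol_deriv_lin[OF rsol f(1), of s0] and dgr = sol_deriv_lin[OF rsol g(1), of s0]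
    and dPv = sol_deriv_lin[OF psol linom, of s0] and dRv = sol_deriv_lin[OF rsol linom, of s0]
  have D0: "D s0 = 1" unfolding D_def using pv ru fv by simp
  have "\<exists>D'. DERIV D s0 :> D'"
    unfolding D_def[abs_def] using DERIV_diff[OF DERIV_mult[OF dfp dgr] DERIV_mult[OF dfr dgp]] by blast
  then obtain D' where dD: "DERIV D s0 :> D'" by blast
  note dN = DERIV_diff[OF DERIV_mult[OF dgr dPv] DERIV_mult[OF dgp dRv]]
  have D0ne: "D s0 \<noteq> 0" using D0 by simp
  note dG = DERIV_divide[OF dN dD D0ne]
  have "eventually (\<lambda>s. D s > 0) (at s0)"
    using DERIV_continuous[OF dD] D0 unfolding isCont_def by (intro order_tendstoD(1)) auto
  then obtain d where d: "d > 0" "\<And>s. s \<noteq> s0 \<Longrightarrow> dist s s0 < d \<Longrightarrow> D s > 0"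
    unfolding eventually_at by auto
  have ev: "eventually (\<lambda>s. omega v (A s v) = G s) (nhds s0)"
    unfolding eventually_nhds_metric
  proof (intro exI[of _ "min d \<delta>"] conjI allI impI)
    show "min d \<delta> > 0" using d dpos by simp
    fix s assume "dist s s0 < min d \<delta>"
    then have s: "\<bar>s - s0\<bar> < \<delta>" and Dp: "D s \<noteq> 0"
      using d D0 by (auto simp: dist_real_def) (metis less_irrefl zero_neq_one)
    show "omega v (A s v) = G s" unfolding G_def using eq[OF s] Dp by (simp add: field_simps)
  qed
  show ?thesis
    unfolding G_def
    by (rule DERIV_cong_ev[OF refl ev[unfolded G_def], THEN iffD2, OF _ dG])
      (simp add: pv ru fv omvu omega_self D0, simp add: omega_expand Bmult v1 v4 power2_eq_square)
qed

end
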